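(* Let $R$ be a representation of $\mathbf{Q}$ with dimension vector $(1,4,1)$ that is globally injective and globally surjective (i.e. $R$ gives a point of $\mathcal{I}(1)$). Then the dimension vectors of the nonzero proper subrepresentations of $R$ are exactly $(0,b,1)$ for $b\in\{0,1,2,3,4\}$.
   Context: The quiver $\mathbf{Q}$ has vertices $-1,0,1$, arrows $\eta_0,\dots,\eta_3:-1\to0$, $\phi_0,\dots,\phi_3:0\to1$ and relations $\phi_i\eta_j+\phi_j\eta_i=0$; a representation consists of vector spaces $V_{-1},V_0,V_1$ and linear maps $f_i:V_{-1}\to V_0$, $g_i:V_0\to V_1$ with $g_if_j+g_jf_i=0$. $R$ is globally injective (resp. surjective) if $\sum\lambda_if_i$ is injective (resp. $\sum\lambda_ig_i$ surjective) for all $\lambda\in\mathbb{C}^4\setminus\{0\}$. $\mathcal{I}(1)$ denotes the set of classes of such globally injective and globally surjective representations of dimension vector $(1,4,1)$, which correspond to locally free rank 2 instanton sheaves of charge 1 on $\mathbb{P}^3$. *)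

theory Defs
  imports "HOL-Analysis.Analysis"
begin

text \<open>A representation of Q with dimension vector (1,4,1) over the complex numbers:
  V_{-1} = complex (one-dimensional), V_0 = complex^4, V_1 = complex.
  The arrows are indexed by the 4-element type 4.
  f i : V_{-1} -> V_0 and g i : V_0 -> V_1 are complex-linear maps.\<close>

definition is_rep_141 ::
  "(4 \<Rightarrow> complex \<Rightarrow> complex^4) \<Rightarrow> (4 \<Rightarrow> complex^4 \<Rightarrow> complex) \<Rightarrow> bool" where
  "is_rep_141 f g \<longleftrightarrow>
     (\<forall>i. Vector_Spaces.linear (*) (*s) (f i)) \<and>
     (\<forall>i. Vector_Spaces.linear (*s) (*) (g i)) \<and>
     (\<forall>i j x. g i (f j x) + g j (f i x) = 0)"

definition globally_injective ::
  "(4 \<Rightarrow> complex \<Rightarrow> complex^4) \<Rightarrow> bool" where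
  "globally_injective f \<longleftrightarrow>
     (\<forall>c::complex^4. c \<noteq> 0 \<longrightarrow> inj (\<lambda>x. \<Sum>i\<in>UNIV. c$i *s f i x))"

definition globally_surjective ::
  "(4 \<Rightarrow> complex^4 \<Rightarrow> complex) \<Rightarrow> bool" where
  "globally_surjective g \<longleftrightarrow>
     (\<forall>c::complex^4. c \<noteq> 0 \<longrightarrow> surj (\<lambda>y. \<Sum>i\<in>UNIV. c$i * g i y))"

text \<open>Subrepresentation (W_{-1}, W_0, W_1): complex subspaces stable under all arrows.\<close>

definition is_subrep ::
  "(4 \<Rightarrow> complex \<Rightarrow> complex^4) \<Rightarrow> (4 \<Rightarrow> complex^4 \<Rightarrow> complex) \<Rightarrow>
   complex set \<Rightarrow> (complex^4) set \<Rightarrow> complex set \<Rightarrow> bool" where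
  "is_subrep f g W V U \<longleftrightarrow>
     vector_space_over_itself.subspace W \<and> vec.subspace V \<and>
     vector_space_over_itself.subspace U \<and>
     (\<forall>i. \<forall>x\<in>W. f i x \<in> V) \<and> (\<forall>i. \<forall>y\<in>V. g i y \<in> U)"

definition dimvec :: "complex set \<Rightarrow> (complex^4) set \<Rightarrow> complex set \<Rightarrow> nat \<times> nat \<times> nat" where
  "dimvec W V U = (vector_space_over_itself.dim W, vec.dim V, vector_space_over_itself.dim U)"

end

theory Submission
  imports Defs
begin

lemma field_subspace_UNIV:
  fixes S :: "complex set"
  assumes "vector_space_over_itself.subspace S" "x \<in> S" "x \<noteq> 0"
  shows "S = UNIV"
proof -
  have "y \<in> S" for y
  proof -
    have "(y / x) * x \<in> S"
      using assms by (intro vector_space_over_itself.subspace_scale) auto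
    then show ?thesis using assms(3) by simp
  qed
  then show ?thesis by auto
qed

lemma lin_mh:
  assumes "Vector_Spaces.linear s1 s2 h"
  shows "module_hom s1 s2 h"
  using assms by (simp add: linear_iff_module_hom)

theorem mainTheorem10:
  fixes f :: "4 \<Rightarrow> complex \<Rightarrow> complex^4" and g :: "4 \<Rightarrow> complex^4 \<Rightarrow> complex"
  assumes "is_rep_141 f g" and "globally_injective f" and "globally_surjective g"
  shows "{dimvec W V U | W V U. is_subrep f g W V U
            \<and> \<not> (W = {0} \<and> V = {0} \<and> U = {0})
            \<and> \<not> (W = UNIV \<and> V = UNIV \<and> U = UNIV)}
         = {(0, b, 1) | b. b \<in> {0..4}}"
proof -
  have lf: "module_hom (*) (*s) (f i)" for i
    using assms(1) lin_mh unfolding is_rep_141_def by blast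
  have lg: "module_hom (*s) (*) (g i)" for i
    using assms(1) lin_mh unfolding is_rep_141_def by blast
  have rel: "g i (f j x) + g j (f i x) = 0" for i j x
    using assms(1) unfolding is_rep_141_def by blast
  define a where "a i = f i 1" for i
  have fa: "f i x = x *s a i" for i x
    using module_hom.scale[OF lf, of i x 1] by (simp add: a_def)
  have f0: "f i 0 = 0" for i using module_hom.zero[OF lf] by blast
  have rela: "g i (a j) = - g j (a i)" for i j
    using rel[of i j 1] unfolding a_def by (simp add: eq_neg_iff_add_eq_0)
  define L where "L c = (\<Sum>i\<in>UNIV. c$i *s a i)" for c :: "complex^4"
  have gL: "g j (L d) = (\<Sum>k\<in>UNIV. d$k * g j (a k))" for j d
    unfolding L_def by (simp add: module_hom.sum[OF lg] module_hom.scale[OF lg])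
  have Llin: "Vector_Spaces.linear (*s) (*s) L"
    unfolding linear_iff_module_hom module_hom_iff
    by (auto simp: L_def vec.module_axioms sum.distrib vector_sadd_rdistrib
        vector_smult_assoc vec.scale_sum_right)
  have Lnz: "L c \<noteq> 0" if "c \<noteq> 0" for c
  proof
    assume "L c = 0"
    have inj: "inj (\<lambda>x. \<Sum>i\<in>UNIV. c$i *s f i x)"
      using assms(2) that unfolding globally_injective_def by blast
    have "(\<lambda>x. \<Sum>i\<in>UNIV. c$i *s f i x) 1 = (\<lambda>x. \<Sum>i\<in>UNIV. c$i *s f i x) 0"
      using \<open>L c = 0\<close> by (simp add: f0 L_def a_def)
    then show False using injD[OF inj, of 1 0] by simp
  qed
  have "inj L"
    using vec.linear_inj_iff_eq_0[OF Llin] Lnz by blast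
  then have Lsurj: "surj L"
    using vec.linear_inj_imp_surj[OF Llin] by blast
  have ker: "y = 0" if "\<And>i. g i y = 0" for y
  proof -
    have "\<exists>c. y = L c" using Lsurj by (simp add: surj_def)
    then obtain c where c: "y = L c" by blast
    have "c = 0"
    proof (rule ccontr)
      assume "c \<noteq> 0"
      then have "surj (\<lambda>z. \<Sum>i\<in>UNIV. c$i * g i z)"
        using assms(3) unfolding globally_surjective_def by blast
      then have "\<exists>z. 1 = (\<Sum>i\<in>UNIV. c$i * g i z)" unfolding surj_def by blast
      then obtain z where z: "(\<Sum>i\<in>UNIV. c$i * g i z) = 1" by auto
      have "\<exists>d. z = L d" using Lsurj by (simp add: surj_def)
      then obtain d where d: "z = L d" by blast
      have "(\<Sum>i\<in>UNIV. c$i * g i z) = (\<Sum>i\<in>UNIV. \<Sum>k\<in>UNIV. c$i * (d$k * g i (a k)))"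
        by (simp add: d gL sum_distrib_left)
      also have "\<dots> = (\<Sum>k\<in>UNIV. \<Sum>i\<in>UNIV. c$i * (d$k * g i (a k)))"
        by (rule sum.swap)
      also have "\<dots> = (\<Sum>k\<in>UNIV. - d$k * (\<Sum>i\<in>UNIV. c$i * g k (a i)))"
      proof -
        have e: "c$i * (d$k * g i (a k)) = - d$k * (c$i * g k (a i))" for i k
          by (simp add: rela[of i k] algebra_simps)
        show ?thesis by (simp only: e sum_distrib_left)
      qed
      also have "\<dots> = (\<Sum>k\<in>UNIV. - d$k * g k y)"
        by (simp add: c gL)
      also have "\<dots> = 0" using that by simp
      finally show False using z by simp
    qed
    then show ?thesis using c by (simp add: L_def)
  qed
  have ax: "axis 0 1 \<noteq> (0::complex^4)"
    by (metis axis_nth zero_neq_one zero_index)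
  then obtain i0 where i0: "g i0 (axis 0 1) \<noteq> 0" using ker by blast
  have dim0: "vector_space_over_itself.dim ({0}::complex set) = 0" by simp
  have dim1: "vector_space_over_itself.dim (UNIV::complex set) = 1" by simp
  show ?thesis
  proof (rule set_eqI, rule iffI)
    fix t :: "nat \<times> nat \<times> nat" assume "t \<in> {dimvec W V U | W V U. is_subrep f g W V U
            \<and> \<not> (W = {0} \<and> V = {0} \<and> U = {0})
            \<and> \<not> (W = UNIV \<and> V = UNIV \<and> U = UNIV)}"
    then obtain W V U where t: "t = dimvec W V U" and sr: "is_subrep f g W V U"
      and nz: "\<not> (W = {0} \<and> V = {0} \<and> U = {0})"
      and nf: "\<not> (W = UNIV \<and> V = UNIV \<and> U = UNIV)" by blast
    have sW: "vector_space_over_itself.subspace W" and sV: "vec.subspace V"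
      and sU: "vector_space_over_itself.subspace U"
      and fWV: "\<And>i x. x \<in> W \<Longrightarrow> f i x \<in> V"
      and gVU: "\<And>i y. y \<in> V \<Longrightarrow> g i y \<in> U"
      using sr unfolding is_subrep_def by blast+
    have W0: "W = {0}"
    proof (rule ccontr)
      assume "W \<noteq> {0}"
      then obtain x where x: "x \<in> W" "x \<noteq> 0"
        using vector_space_over_itself.subspace_0[OF sW] by blast
      then have WU: "W = UNIV" using field_subspace_UNIV sW by blast
      have ai: "a i \<in> V" for i
      proof -
        have "(1/x) *s f i x \<in> V" using fWV[OF x(1)] sV by (simp add: vec.subspace_scale)
        moreover have "(1/x) *s f i x = a i" using x(2) by (simp add: fa vector_smult_assoc)
        ultimately show ?thesis by simp
      qed
      have VU: "V = UNIV"
      proof -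
        have "y \<in> V" for y
        proof -
          have "\<exists>c. y = L c" using Lsurj by (simp add: surj_def)
          then obtain c where c: "y = L c" by blast
          show ?thesis unfolding c L_def
            by (rule vec.subspace_sum[OF sV]) (simp add: vec.subspace_scale[OF sV] ai)
        qed
        then show ?thesis by auto
      qed
      have "g i0 (axis 0 1) \<in> U" using gVU VU by blast
      then have "U = UNIV" using field_subspace_UNIV sU i0 by blast
      then show False using nf WU VU by blast
    qed
    have "U \<noteq> {0}"
    proof
      assume U0: "U = {0}"
      have "V = {0}"
      proof -
        have "y = 0" if "y \<in> V" for y using gVU[OF that] U0 ker by blast
        then show ?thesis using vec.subspace_0[OF sV] by blast
      qed
      then show False using nz W0 U0 by blast
    qed
    then obtain u where "u \<in> U" "u \<noteq> 0"
      using vector_space_over_itself.subspace_0[OF sU] by blast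
    then have UU: "U = UNIV" using field_subspace_UNIV sU by blast
    have "vec.dim V \<le> 4"
      using vec.dim_subset_UNIV[of V] by (simp add: vec.dimension_def card_cart_basis)
    then show "t \<in> {(0, b, 1) | b. b \<in> {0..4}}"
      using t W0 UU dim0 dim1 by (auto simp: dimvec_def)
  next
    fix t :: "nat \<times> nat \<times> nat" assume "t \<in> {(0, b, 1) | b. b \<in> {0..4}}"
    then obtain b :: nat where t: "t = (0, b, 1)" and b: "b \<le> 4" by auto
    have "b \<le> card (cart_basis :: (complex^4) set)" using b by (simp add: card_cart_basis)
    then obtain S where S: "S \<subseteq> (cart_basis :: (complex^4) set)" "card S = b" "finite S"
      by (rule obtain_subset_with_card_n)
    have ind: "vec.independent S"
      using vec.independent_mono[OF independent_cart_basis S(1)] .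
    have dS: "vec.dim (vec.span S) = b"
      using vec.dim_span_eq_card_independent[OF ind] S(2) by simp
    have sr: "is_subrep f g {0} (vec.span S) UNIV"
      unfolding is_subrep_def
      by (simp add: vec.subspace_span f0 vec.span_zero vector_space_over_itself.subspace_UNIV)
    have "t = dimvec {0} (vec.span S) UNIV" using t dS dim0 dim1 by (simp add: dimvec_def)
    moreover have "(UNIV::complex set) \<noteq> {0}" by auto
    ultimately show "t \<in> {dimvec W V U | W V U. is_subrep f g W V U
            \<and> \<not> (W = {0} \<and> V = {0} \<and> U = {0})
            \<and> \<not> (W = UNIV \<and> V = UNIV \<and> U = UNIV)}"
      using sr by blast
  qed
qed

end
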